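(* Let $1\le k\le n$ and $(\pi,S)\in\mathcal{B}^{>}_{n-1,k-1}$. Then (a) $\mathrm{fmaj}(\phi^{*}_{n,k}(i,(\pi,S)))=\mathrm{fmaj}((\pi,S))+2i-1$ for every $i\in\{1,\dots,n-k\}$; (b) $\mathrm{fmaj}(\phi^{*}_{\overline{n},k}(i,(\pi,S)))=\mathrm{fmaj}((\pi,S))+2i-2$ for every $i\in\{1,\dots,n-k\}$; (c) $\mathrm{fmaj}(\phi^{*}_{\overline{n},k}(0,(\pi,S)))=\mathrm{fmaj}((\pi,S))+2n-2k$.
   Context: $\mathcal{B}_m$ is the group of signed permutations of $[m]$ (bijections $\pi$ of $\{\pm1,\dots,\pm m\}$ with $\pi(-i)=-\pi(i)$, written $\pi=\pi_1\cdots\pi_m$), integers ordered naturally, $\overline{x}=-x$. Set $\pi_0=0$; $\mathrm{Des}_B(\pi)=\{i\in\{0,\dots,m-1\}:\pi_i>\pi_{i+1}\}$, $\mathrm{neg}(\pi)=|\{i:\pi_i<0\}|$, $\mathrm{fmaj}(\pi)=\sum_{i\in\mathrm{Des}_B(\pi)}2i+\mathrm{neg}(\pi)$. Let $\mathcal{B}^{>}_{m,k}=\{(\pi,S):\pi\in\mathcal{B}_m,\ S\subseteq\mathrm{Des}_B(\pi),\ |S|=k\}$ and for $(\pi,S)\in\mathcal{B}^{>}_{m,k}$, $\mathrm{fmaj}((\pi,S))=\mathrm{fmaj}(\pi)-\sum_{j\in S}\bigl(2|\mathrm{Des}_B(\pi)\cap\{j,\dots,m-1\}|-1\bigr)$.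 Positions: for $p\in\{0,\dots,m\}$, position $p$ is the space immediately after $\pi_p$. The fmaj-labelling of $(\pi,S)\in\mathcal{B}^{>}_{m,k}$ labels positions not in $S$: position $m$ gets label $0$; positions in $\mathrm{Des}_B(\pi)\setminus S$ get labels $1,2,\dots$ from right to left; remaining positions in $\{0,\dots,m-1\}\setminus\mathrm{Des}_B(\pi)$ get the next consecutive labels from left to right (labels $0,\dots,m-k$). For $\alpha\in\{n,\overline{n}\}$, $(\pi,S)\in\mathcal{B}^{>}_{n-1,k-1}$ and a label $i$, let $p$ be the position with label $i$, $\tau=\pi_1\cdots\pi_p\,\alpha\,\pi_{p+1}\cdots\pi_{n-1}\in\mathcal{B}_n$; starred positions $j\in S$ with $j<p$ stay at $j$, each starred $j\in S$ with $j>p$ is replaced by the largest element of $\mathrm{Des}_B(\tau)$ smaller than $j+1$; finally the largest element of $\mathrm{Des}_B(\tau)$ is added to the set of starred positions, giving $T$. Define $\phi^{*}_{\alpha,k}(i,(\pi,S))=(\tau,T)$; this gives maps $\phi^{*}_{n,k}:\{1,\dots,n-k\}\times\mathcal{B}^{>}_{n-1,k-1}\to\mathcal{B}^{>}_{n,k}$ and $\phi^{*}_{\overline{n},k}:\{0,1,\dots,n-k\}\times\mathcal{B}^{>}_{n-1,k-1}\to\mathcal{B}^{>}_{n,k}$. *)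

theory Defs
  imports Main
begin

text \<open>A signed permutation of [m] is represented by its window pi_1 ... pi_m, an int list.
Positions are natural numbers 0..m.\<close>

definition signed_perms :: "nat \<Rightarrow> int list set" where
  "signed_perms m = {xs. length xs = m \<and> distinct (map abs xs) \<and> abs ` set xs = {1..int m}}"

definition pval :: "int list \<Rightarrow> nat \<Rightarrow> int" where
  "pval xs i = (if i = 0 then 0 else xs ! (i - 1))"

definition desB :: "int list \<Rightarrow> nat set" where
  "desB xs = {i. i < length xs \<and> pval xs i > pval xs (Suc i)}"

definition negB :: "int list \<Rightarrow> nat" where
  "negB xs = card {i. i < length xs \<and> xs ! i < 0}"

definition fmaj :: "int list \<Rightarrow> int" where
  "fmaj xs = int (\<Sum>i\<in>desB xs. 2 * i) + int (negB xs)"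

definition Bgt :: "nat \<Rightarrow> nat \<Rightarrow> (int list \<times> nat set) set" where
  "Bgt m k = {(xs, S). xs \<in> signed_perms m \<and> S \<subseteq> desB xs \<and> card S = k}"

definition fmajS :: "int list \<times> nat set \<Rightarrow> int" where
  "fmajS P = (case P of (xs, S) \<Rightarrow>
     fmaj xs - (\<Sum>j\<in>S. 2 * int (card (desB xs \<inter> {j..<length xs})) - 1))"

definition fmaj_label :: "int list \<Rightarrow> nat set \<Rightarrow> nat \<Rightarrow> nat" where
  "fmaj_label xs S p =
     (if p = length xs then 0
      else if p \<in> desB xs - S then card {q \<in> desB xs - S. p \<le> q}
      else card (desB xs - S) + card {q. q < length xs \<and> q \<notin> desB xs \<and> q \<le> p})"

definition label_pos :: "int list \<Rightarrow> nat set \<Rightarrow> nat \<Rightarrow> nat" where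
  "label_pos xs S i = (THE p. p \<le> length xs \<and> p \<notin> S \<and> fmaj_label xs S p = i)"

text \<open>The map phi*_{alpha,k}(i,(pi,S)); it does not depend on k except through its domain.\<close>
definition phi_star :: "int \<Rightarrow> nat \<Rightarrow> int list \<times> nat set \<Rightarrow> int list \<times> nat set" where
  "phi_star \<alpha> i P = (case P of (xs, S) \<Rightarrow>
     (let p = label_pos xs S i;
          \<tau> = take p xs @ [\<alpha>] @ drop p xs;
          T = {j \<in> S. j < p}
              \<union> (\<lambda>j. Max {d \<in> desB \<tau>. d < j + 1}) ` {j \<in> S. p < j}
              \<union> {Max (desB \<tau>)}
      in (\<tau>, T)))"

end

theory Submission
  imports Defs
begin

lemma tau_nth:
  assumes "p \<le> length xs"
  shows "(take p xs @ a # drop p xs) ! i = (if i < p then xs ! i else if i = p then a else xs ! (i - 1))"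
  using assms by (auto simp: nth_append min_def nth_drop)

lemma pval_tau:
  assumes "p \<le> length xs"
  shows "pval (take p xs @ a # drop p xs) q = (if q \<le> p then pval xs q else if q = Suc p then a else pval xs (q - 1))"
  using assms by (auto simp: pval_def tau_nth)

lemma pval_bound:
  assumes "\<forall>x\<in>set xs. \<bar>x\<bar> < \<bar>a\<bar>" "0 < \<bar>a\<bar>" "q \<le> length xs"
  shows "\<bar>pval xs q\<bar> < \<bar>a\<bar>"
  using assms by (auto simp: pval_def)

lemma desB_sub: "desB xs \<subseteq> {..<length xs}"
  by (auto simp: desB_def)

lemma desB_tau:
  assumes "p \<le> length xs" "\<forall>x\<in>set xs. \<bar>x\<bar> < \<bar>a\<bar>" "0 < \<bar>a\<bar>" "0 < a \<Longrightarrow> p < length xs"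
  shows "desB (take p xs @ a # drop p xs) =
    {d \<in> desB xs. d < p} \<union> {if 0 < a then Suc p else p} \<union> Suc ` {d \<in> desB xs. p < d}"
proof (rule set_eqI)
  fix q
  let ?t = "take p xs @ a # drop p xs"
  have lt: "length ?t = Suc (length xs)" using assms(1) by simp
  have bp: "\<bar>pval xs q'\<bar> < \<bar>a\<bar>" if "q' \<le> length xs" for q'
    using pval_bound[OF assms(2,3) that] .
  show "q \<in> desB ?t \<longleftrightarrow> q \<in> {d \<in> desB xs. d < p} \<union> {if 0 < a then Suc p else p} \<union> Suc ` {d \<in> desB xs. p < d}"
  proof (cases "q < p")
    case True
    then show ?thesis using assms(1) by (auto simp: desB_def pval_tau lt)
  next
    case False
    show ?thesis
    proof (cases "q = p")
      case True
      have "pval xs p > a \<longleftrightarrow> \<not> 0 < a" using bp[of p] assms(1) by auto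
      then show ?thesis using True assms(1,4) by (auto simp: desB_def pval_tau lt)
    next
      case False2: False
      show ?thesis
      proof (cases "q = Suc p")
        case True
        have "a > pval xs (Suc p) \<longleftrightarrow> 0 < a" if "Suc p \<le> length xs" using bp[of "Suc p"] that by auto
        then show ?thesis using True assms(1,4) by (auto simp: desB_def pval_tau lt)
      next
        case False3: False
        then obtain r where qq: "q = Suc r" "p < r" using False False2 by (cases q) auto
        have "q \<in> Suc ` {d \<in> desB xs. p < d} \<longleftrightarrow> r \<in> desB xs"
          using qq by auto
        moreover have "q \<in> desB ?t \<longleftrightarrow> r \<in> desB xs"
          using qq assms(1) unfolding desB_def lt
          by (simp add: pval_tau)
        ultimately show ?thesis using False False2 False3 by auto
      qed
    qed
  qed
qed


lemma negB_tau:
  assumes "p \<le> length xs"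
  shows "negB (take p xs @ a # drop p xs) = negB xs + (if a < 0 then 1 else 0)"
proof -
  have "negB ys = length (filter (\<lambda>x. x < 0) ys)" for ys
    unfolding negB_def by (simp add: length_filter_conv_card)
  moreover have "length (filter (\<lambda>x. x < 0) (take p xs @ a # drop p xs))
     = length (filter (\<lambda>x. x < 0) xs) + (if a < 0 then 1 else 0)"
  proof -
    have "length (filter (\<lambda>x. x < 0) xs) = length (filter (\<lambda>x. x < 0) (take p xs @ drop p xs))" by simp
    then show ?thesis by (simp only: filter_append length_append) auto
  qed
  ultimately show ?thesis by simp
qed

definition rk :: "nat set \<Rightarrow> nat \<Rightarrow> nat" where
  "rk D j = card {d \<in> D. j \<le> d}"

lemma G_lemma:
  fixes D S D' T :: "nat set" and p c :: nat
  assumes fin: "finite D" and SD: "S \<subseteq> D" and pS: "p \<notin> S" and pc: "p \<le> c" "c \<le> Suc p"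
  and D'_def: "D' = {d\<in>D. d<p} \<union> {c} \<union> Suc ` {d\<in>D. p<d}"
  and T_def: "T = {j\<in>S. j<p} \<union> (\<lambda>j. Max {d\<in>D'. d < j+1}) ` {j\<in>S. p<j} \<union> {Max D'}"
  shows "(\<Sum>j\<in>T. 2 * int (rk D' j) - 1) = (\<Sum>j\<in>S. 2 * int (rk D j) - 1)
     + 2 * (if p\<in>D then 0 else 1) * int (card {j\<in>S. j<p}) + 2 * int (card {j\<in>S. p<j}) + 1"
proof -
  define f where "f j = Max {d\<in>D'. d < j+1}" for j
  define A where "A = {j\<in>S. j<p}"
  define B where "B = {j\<in>S. p<j}"
  define M where "M = Max D'"
  have finD': "finite D'" using fin D'_def by auto
  have finS: "finite S" using fin SD finite_subset by blast
  have cD': "c \<in> D'" using D'_def by auto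
  have SucD': "Suc j \<in> D'" if "j \<in> B" for j using that SD unfolding B_def D'_def by auto
  have fprops: "f j \<in> D' \<and> c \<le> f j \<and> f j \<le> j \<and> (\<forall>d\<in>D'. d \<le> j \<longrightarrow> d \<le> f j)" if "j \<in> B" for j
  proof -
    have cj: "c \<le> j" using that pc unfolding B_def by auto
    have ne: "{d\<in>D'. d < j+1} \<noteq> {}" using cD' cj by auto
    have fn: "finite {d\<in>D'. d < j+1}" using finD' by auto
    have "f j \<in> {d\<in>D'. d < j+1}" unfolding f_def using Max_in[OF fn ne] .
    moreover have "d \<le> f j" if "d \<in> D'" "d \<le> j" for d
      unfolding f_def using that fn by (intro Max_ge) auto
    ultimately show ?thesis using cD' cj by auto
  qed
  have rk_f: "rk D' (f j) = Suc (rk D j)" if "j \<in> B" for j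
  proof -
    have jp: "p < j" using that B_def by auto
    have e1: "{d \<in> D'. f j \<le> d} = insert (f j) {d\<in>D'. j < d}"
      using fprops[OF that] by force
    have e2: "{d\<in>D'. j < d} = Suc ` {d\<in>D. j \<le> d}"
    proof
      show "{d\<in>D'. j < d} \<subseteq> Suc ` {d\<in>D. j \<le> d}"
        using jp pc unfolding D'_def by auto
      show "Suc ` {d\<in>D. j \<le> d} \<subseteq> {d\<in>D'. j < d}"
        using jp unfolding D'_def by auto
    qed
    have "f j \<notin> {d\<in>D'. j < d}" using fprops[OF that] by auto
    then have "card {d \<in> D'. f j \<le> d} = Suc (card {d\<in>D'. j < d})"
      unfolding e1 using finD' by (simp)
    also have "card {d\<in>D'. j < d} = card {d\<in>D. j \<le> d}"
      unfolding e2 by (simp add: card_image)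
    finally show ?thesis unfolding rk_def .
  qed
  have rk_A: "rk D' j = rk D j + (if p\<in>D then 0 else 1)" if "j \<in> A" for j
  proof -
    have jp: "j < p" using that A_def by auto
    have "{d\<in>D'. j \<le> d} = {d\<in>D. j \<le> d \<and> d < p} \<union> ({c} \<union> Suc ` {d\<in>D. p<d})"
      using jp pc unfolding D'_def by auto
    moreover have "{d\<in>D. j \<le> d} = {d\<in>D. j \<le> d \<and> d < p} \<union> (({p} \<inter> D) \<union> {d\<in>D. p<d})"
      using jp by auto
    moreover have "card ({c} \<union> Suc ` {d\<in>D. p<d}) = Suc (card {d\<in>D. p<d})"
    proof -
      have "c \<notin> Suc ` {d\<in>D. p<d}" using pc by auto
      then show ?thesis using fin by (simp add: card_image)
    qed
    moreover have "card (({p} \<inter> D) \<union> {d\<in>D. p<d}) = (if p\<in>D then 1 else 0) + card {d\<in>D. p<d}"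
      using fin by (auto simp: card_insert_if)
    moreover have "card ({d\<in>D. j \<le> d \<and> d < p} \<union> ({c} \<union> Suc ` {d\<in>D. p<d}))
       = card {d\<in>D. j \<le> d \<and> d < p} + card ({c} \<union> Suc ` {d\<in>D. p<d})"
      using fin pc by (intro card_Un_disjoint) auto
    moreover have "card ({d\<in>D. j \<le> d \<and> d < p} \<union> (({p} \<inter> D) \<union> {d\<in>D. p<d}))
       = card {d\<in>D. j \<le> d \<and> d < p} + card (({p} \<inter> D) \<union> {d\<in>D. p<d})"
      using fin by (intro card_Un_disjoint) auto
    ultimately show ?thesis unfolding rk_def by auto
  qed
  have rk_M: "rk D' M = 1"
  proof -
    have "{d\<in>D'. M \<le> d} = {M}" unfolding M_def using finD' cD'
      by (auto intro: Max_in) (meson Max_ge antisym)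
    then show ?thesis unfolding rk_def by simp
  qed
  have Mge: "c \<le> M" "\<And>j. j \<in> B \<Longrightarrow> Suc j \<le> M"
    using finD' cD' SucD' unfolding M_def by auto
  have injf: "inj_on f B"
  proof
    fix x y assume xy: "x \<in> B" "y \<in> B" "f x = f y"
    show "x = y"
    proof (rule ccontr)
      assume "x \<noteq> y"
      then consider "x < y" | "y < x" by linarith
      then show False
      proof cases
        case 1
        then have "Suc x \<le> f y" using fprops[OF xy(2)] SucD'[OF xy(1)] by auto
        then show False using fprops[OF xy(1)] xy(3) by auto
      next
        case 2
        then have "Suc y \<le> f x" using fprops[OF xy(1)] SucD'[OF xy(2)] by auto
        then show False using fprops[OF xy(2)] xy(3) by auto
      qed
    qed
  qed
  have TT: "T = A \<union> (f ` B \<union> {M})" unfolding T_def A_def B_def f_def M_def by auto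
  have finA: "finite A" "finite B" using finS unfolding A_def B_def by auto
  have dis1: "A \<inter> (f ` B \<union> {M}) = {}"
    using fprops Mge pc unfolding A_def by fastforce
  have dis2: "f ` B \<inter> {M} = {}" using fprops Mge by fastforce
  define g where "g D0 j = 2 * int (rk D0 j) - 1" for D0 j
  have "sum (g D') T = sum (g D') A + (sum (g D') (f ` B) + g D' M)"
    unfolding TT using finA dis1 dis2
    by (simp add: sum.union_disjoint)
  also have "sum (g D') (f ` B) = sum (g D' \<circ> f) B" using injf by (simp add: sum.reindex)
  also have "\<dots> = sum (\<lambda>j. g D j + 2) B"
    by (rule sum.cong) (auto simp: g_def rk_f)
  also have "\<dots> = sum (g D) B + 2 * int (card B)"
    by (simp add: sum.distrib)
  also have "sum (g D') A = sum (\<lambda>j. g D j + 2 * (if p\<in>D then 0 else 1)) A"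
    by (rule sum.cong) (auto simp: g_def rk_A)
  also have "\<dots> = sum (g D) A + 2 * (if p\<in>D then 0 else 1) * int (card A)"
    by (simp add: sum.distrib)
  also have "g D' M = 1" by (simp add: g_def rk_M)
  also have "sum (g D) S = sum (g D) A + sum (g D) B"
  proof -
    have "S = A \<union> B" using pS unfolding A_def B_def by auto (metis linorder_neqE_nat)
    moreover have "A \<inter> B = {}" unfolding A_def B_def by auto
    ultimately show ?thesis using finA by (simp add: sum.union_disjoint)
  qed
  ultimately show ?thesis unfolding g_def A_def B_def by simp
qed


lemma sum_D':
  fixes D D' :: "nat set"
  assumes fin: "finite D" and pc: "p \<le> c" "c \<le> Suc p"
  and D'_def: "D' = {d\<in>D. d<p} \<union> {c} \<union> Suc ` {d\<in>D. p<d}"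
  shows "(\<Sum>d\<in>D'. 2*d) + (if p\<in>D then 2*p else 0) = (\<Sum>d\<in>D. 2*d) + 2*c + 2*card {d\<in>D. p<d}"
proof -
  have f1: "finite {d\<in>D. d<p}" "finite (Suc ` {d\<in>D. p<d})" "finite {d\<in>D. p<d}" using fin by auto
  have "(\<Sum>d\<in>D'. 2*d) = (\<Sum>d\<in>{d\<in>D. d<p}. 2*d) + ((\<Sum>d\<in>{c}. 2*d) + (\<Sum>d\<in>Suc ` {d\<in>D. p<d}. 2*d))"
    unfolding D'_def using f1 pc
    by (subst sum.union_disjoint; (auto)?; subst sum.union_disjoint; auto)
  also have "(\<Sum>d\<in>Suc ` {d\<in>D. p<d}. 2*d) = (\<Sum>d\<in>{d\<in>D. p<d}. 2*d) + 2 * card {d\<in>D. p<d}"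
  proof -
    have "(\<Sum>d\<in>Suc ` {d\<in>D. p<d}. 2*d) = (\<Sum>d\<in>{d\<in>D. p<d}. 2*d + 2)" by (simp add: sum.reindex)
    also have "\<dots> = (\<Sum>d\<in>{d\<in>D. p<d}. 2*d) + (\<Sum>d\<in>{d\<in>D. p<d}. 2)" by (rule sum.distrib)
    also have "(\<Sum>d\<in>{d\<in>D. p<d}. (2::nat)) = 2 * card {d\<in>D. p<d}" by simp
    finally show ?thesis .
  qed
  finally have e1: "(\<Sum>d\<in>D'. 2*d) = (\<Sum>d\<in>{d\<in>D. d<p}. 2*d) + 2*c + (\<Sum>d\<in>{d\<in>D. p<d}. 2*d) + 2 * card {d\<in>D. p<d}"
    by simp
  have "D = {d\<in>D. d<p} \<union> (({p} \<inter> D) \<union> {d\<in>D. p<d})" by auto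
  then have "(\<Sum>d\<in>D. 2*d) = (\<Sum>d\<in>{d\<in>D. d<p}. 2*d) + ((\<Sum>d\<in>{p} \<inter> D. 2*d) + (\<Sum>d\<in>{d\<in>D. p<d}. 2*d))"
  proof -
    have "(\<Sum>d\<in>D. 2*d) = (\<Sum>d\<in>{d\<in>D. d<p} \<union> (({p} \<inter> D) \<union> {d\<in>D. p<d}). 2*d)"
      using \<open>D = _\<close> by simp
    also have "\<dots> = (\<Sum>d\<in>{d\<in>D. d<p}. 2*d) + (\<Sum>d\<in>({p} \<inter> D) \<union> {d\<in>D. p<d}. 2*d)"
      using f1 by (intro sum.union_disjoint) auto
    also have "(\<Sum>d\<in>({p} \<inter> D) \<union> {d\<in>D. p<d}. 2*d) = (\<Sum>d\<in>{p} \<inter> D. 2*d) + (\<Sum>d\<in>{d\<in>D. p<d}. 2*d)"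
      using f1 by (intro sum.union_disjoint) auto
    finally show ?thesis .
  qed
  moreover have "(\<Sum>d\<in>{p} \<inter> D. 2*d) = (if p\<in>D then 2*p else 0)" by auto
  ultimately show ?thesis using e1 by simp
qed

lemma desB_rk: "card (desB xs \<inter> {j..<length xs}) = rk (desB xs) j"
proof -
  have "desB xs \<inter> {j..<length xs} = {d \<in> desB xs. j \<le> d}" using desB_sub[of xs] by auto
  then show ?thesis by (simp add: rk_def)
qed

lemma fmajS_rk: "fmajS (xs, S) = int (\<Sum>i\<in>desB xs. 2 * i) + int (negB xs) - (\<Sum>j\<in>S. 2 * int (rk (desB xs) j) - 1)"
  by (simp add: fmajS_def fmaj_def desB_rk)


lemma finite_desB: "finite (desB xs)"
  using desB_sub finite_subset by blast

lemma label_props: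
  assumes SD: "S \<subseteq> desB xs" and i: "i \<le> length xs - card S"
  shows "label_pos xs S i \<le> length xs \<and> label_pos xs S i \<notin> S \<and> fmaj_label xs S (label_pos xs S i) = i"
proof -
  define m where "m = length xs"
  define D where "D = desB xs"
  define E where "E = D - S"
  define Aset where "Aset = {q. q < m \<and> q \<notin> D}"
  define P where "P = {p. p \<le> m \<and> p \<notin> S}"
  define L where "L = fmaj_label xs S"
  have finD: "finite D" unfolding D_def by (rule finite_desB)
  have Dm: "D \<subseteq> {..<m}" unfolding D_def m_def by (rule desB_sub)
  have finS: "finite S" using SD finD finite_subset unfolding D_def by blast
  have finE: "finite E" using finD unfolding E_def by auto
  have finA: "finite Aset" unfolding Aset_def by auto
  have cE: "card E = card D - card S" unfolding E_def using SD finS unfolding D_def by (simp add: card_Diff_subset)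
  have cSD: "card S \<le> card D" using card_mono[OF finD] SD unfolding D_def by simp
  have cA: "card Aset = m - card D"
  proof -
    have "Aset = {..<m} - D" unfolding Aset_def by auto
    then show ?thesis using Dm finD by (simp add: card_Diff_subset)
  qed
  have cDm: "card D \<le> m" using card_mono[OF _ Dm] by simp
  have Lm: "L m = 0" unfolding L_def m_def fmaj_label_def by simp
  have LE: "L p = card {q\<in>E. p \<le> q}" if "p < m" "p \<in> E" for p
    using that unfolding L_def fmaj_label_def m_def E_def D_def by simp
  have LA: "L p = card E + card {q\<in>Aset. q \<le> p}" if "p < m" "p \<in> Aset" for p
  proof -
    have "p \<notin> desB xs" using that unfolding Aset_def D_def by auto
    moreover have "{q. q < length xs \<and> q \<notin> desB xs \<and> q \<le> p} = {q\<in>Aset. q \<le> p}"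
      unfolding Aset_def m_def D_def by auto
    ultimately show ?thesis using that unfolding L_def fmaj_label_def m_def E_def D_def by simp
  qed
  have Pcases: "p = m \<or> (p < m \<and> p \<in> E) \<or> (p < m \<and> p \<in> Aset)" if "p \<in> P" for p
    using that unfolding P_def E_def Aset_def by auto
  have LEb: "1 \<le> L p \<and> L p \<le> card E" if "p < m" "p \<in> E" for p
  proof -
    have "p \<in> {q\<in>E. p \<le> q}" using that by auto
    then have "1 \<le> card {q\<in>E. p \<le> q}" using finE by (metis (no_types, lifting) One_nat_def Suc_leI card_gt_0_iff empty_iff finite_subset mem_Collect_eq subsetI)
    moreover have "card {q\<in>E. p \<le> q} \<le> card E" using finE by (intro card_mono) auto
    ultimately show ?thesis using LE[OF that] by simp
  qed
  have LAb: "card E + 1 \<le> L p \<and> L p \<le> card E + card Aset" if "p < m" "p \<in> Aset" for p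
  proof -
    have "p \<in> {q\<in>Aset. q \<le> p}" using that by auto
    then have "1 \<le> card {q\<in>Aset. q \<le> p}" using finA by (metis (no_types, lifting) One_nat_def Suc_leI card_gt_0_iff empty_iff finite_subset mem_Collect_eq subsetI)
    moreover have "card {q\<in>Aset. q \<le> p} \<le> card Aset" using finA by (intro card_mono) auto
    ultimately show ?thesis using LA[OF that] by simp
  qed
  have Ebound: "card E + card Aset = m - card S" using cE cA cSD cDm by simp
  have injL: "inj_on L P"
  proof
    fix x y assume xy: "x \<in> P" "y \<in> P" "L x = L y"
    show "x = y"
    proof (rule ccontr)
      assume ne: "x \<noteq> y"
      {
        fix u v assume uv: "u \<in> P" "v \<in> P" "L u = L v" "u < v"
        have False
        proof -
          have "u < m" using uv P_def by auto
          consider "v = m" | "v < m" "v \<in> E" | "v < m" "v \<in> Aset" using Pcases[OF uv(2)] by auto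
          then show False
          proof cases
            case 1
            then show ?thesis using Pcases[OF uv(1)] LEb LAb Lm uv by fastforce
          next
            case 2
            then have uE: "u \<in> E" using Pcases[OF uv(1)] LEb LAb uv by fastforce
            have "u \<in> {q\<in>E. u \<le> q}" "u \<notin> {q\<in>E. v \<le> q}" using uE uv(4) by auto
            then have ne2: "{q\<in>E. v \<le> q} \<noteq> {q\<in>E. u \<le> q}" by blast
            have "{q\<in>E. v \<le> q} \<subseteq> {q\<in>E. u \<le> q}" using uv(4) by auto
            then have "{q\<in>E. v \<le> q} \<subset> {q\<in>E. u \<le> q}" using ne2 by (rule psubsetI)
            then have "card {q\<in>E. v \<le> q} < card {q\<in>E. u \<le> q}" using finE by (intro psubset_card_mono) auto
            then show ?thesis using LE[OF 2] LE[OF \<open>u < m\<close> uE] uv by simp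
          next
            case 3
            then have uA: "u \<in> Aset" using Pcases[OF uv(1)] LEb LAb uv by fastforce
            have "v \<in> {q\<in>Aset. q \<le> v}" "v \<notin> {q\<in>Aset. q \<le> u}" using 3 uv(4) by auto
            then have ne2: "{q\<in>Aset. q \<le> u} \<noteq> {q\<in>Aset. q \<le> v}" by blast
            have "{q\<in>Aset. q \<le> u} \<subseteq> {q\<in>Aset. q \<le> v}" using uv(4) by auto
            then have "{q\<in>Aset. q \<le> u} \<subset> {q\<in>Aset. q \<le> v}" using ne2 by (rule psubsetI)
            then have "card {q\<in>Aset. q \<le> u} < card {q\<in>Aset. q \<le> v}" using finA by (intro psubset_card_mono) auto
            then show ?thesis using LA[OF 3] LA[OF \<open>u < m\<close> uA] uv by simp
          qed
        qed
      }
      then show False using xy ne by (metis linorder_neqE_nat)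
    qed
  qed
  have img: "L ` P \<subseteq> {0..m - card S}"
    using Pcases LEb LAb Lm Ebound by fastforce
  have cP: "card P = Suc (m - card S)"
  proof -
    have "P = {..m} - S" unfolding P_def by auto
    moreover have "S \<subseteq> {..m}" using SD Dm unfolding D_def by auto
    moreover have "card S \<le> m" using cSD cDm by simp
    ultimately show ?thesis using finS by (simp add: card_Diff_subset)
  qed
  have finP: "finite P" unfolding P_def by auto
  have "L ` P = {0..m - card S}"
    using img by (intro card_subset_eq) (auto simp: card_image[OF injL] cP)
  then have "i \<in> L ` P" using i unfolding m_def by auto
  then obtain p where p: "p \<in> P" "L p = i" by auto
  have ex1: "\<exists>!p. p \<le> length xs \<and> p \<notin> S \<and> fmaj_label xs S p = i"
  proof (rule ex1I[of _ p])
    show "p \<le> length xs \<and> p \<notin> S \<and> fmaj_label xs S p = i" using p unfolding P_def m_def L_def by auto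
    fix y assume "y \<le> length xs \<and> y \<notin> S \<and> fmaj_label xs S y = i"
    then have "y \<in> P" "L y = L p" using p unfolding P_def m_def L_def by auto
    then show "y = p" using injL p(1) by (auto dest: inj_onD)
  qed
  show ?thesis unfolding label_pos_def using theI'[OF ex1] .
qed


lemma main_step:
  assumes xs: "xs \<in> signed_perms m" and SD: "S \<subseteq> desB xs" and p: "p \<le> m" "p \<notin> S"
   and a: "a = int (Suc m) \<or> a = - int (Suc m)" and ap: "0 < a \<Longrightarrow> p < m"
  shows "fmajS (take p xs @ a # drop p xs,
          {j \<in> S. j < p} \<union> (\<lambda>j. Max {d \<in> desB (take p xs @ a # drop p xs). d < j + 1}) ` {j \<in> S. p < j}
            \<union> {Max (desB (take p xs @ a # drop p xs))})
    = fmajS (xs, S) + 2 * int (if 0<a then Suc p else p) + 2 * int (card {d\<in>desB xs. p<d})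
      - (if p \<in> desB xs then 2 * int p else 0) + (if a < 0 then 1 else 0)
      - 2 * (if p \<in> desB xs then 0 else 1) * int (card {j\<in>S. j<p}) - 2 * int (card {j\<in>S. p<j}) - 1"
proof -
  define t where "t = take p xs @ a # drop p xs"
  define D where "D = desB xs"
  define D' where "D' = desB t"
  define c where "c = (if 0<a then Suc p else p)"
  define T where "T = {j \<in> S. j < p} \<union> (\<lambda>j. Max {d \<in> D'. d < j + 1}) ` {j \<in> S. p < j} \<union> {Max D'}"
  have len: "length xs = m" using xs unfolding signed_perms_def by auto
  have bnd: "\<forall>x\<in>set xs. \<bar>x\<bar> < \<bar>a\<bar>"
  proof
    fix x assume "x \<in> set xs"
    then have "\<bar>x\<bar> \<in> {1..int m}" using xs unfolding signed_perms_def by auto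
    then show "\<bar>x\<bar> < \<bar>a\<bar>" using a by auto
  qed
  have a0: "0 < \<bar>a\<bar>" using a by auto
  have pl: "p \<le> length xs" using p len by simp
  have D'eq: "D' = {d\<in>D. d<p} \<union> {c} \<union> Suc ` {d\<in>D. p<d}"
    unfolding D'_def t_def D_def c_def using desB_tau[OF pl bnd a0] ap len by simp
  have pc: "p \<le> c" "c \<le> Suc p" unfolding c_def by auto
  have finD: "finite D" unfolding D_def by (rule finite_desB)
  have G: "(\<Sum>j\<in>T. 2 * int (rk D' j) - 1) = (\<Sum>j\<in>S. 2 * int (rk D j) - 1)
     + 2 * (if p\<in>D then 0 else 1) * int (card {j\<in>S. j<p}) + 2 * int (card {j\<in>S. p<j}) + 1"
    by (rule G_lemma[OF finD SD[folded D_def] p(2) pc D'eq T_def])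
  have sm: "(\<Sum>d\<in>D'. 2*d) + (if p\<in>D then 2*p else 0) = (\<Sum>d\<in>D. 2*d) + 2*c + 2*card {d\<in>D. p<d}"
    by (rule sum_D'[OF finD pc D'eq])
  have smi: "int (\<Sum>d\<in>D'. 2*d) = int (\<Sum>d\<in>D. 2*d) + 2 * int c + 2 * int (card {d\<in>D. p<d}) - (if p\<in>D then 2 * int p else 0)"
  proof -
    have "int ((\<Sum>d\<in>D'. 2*d) + (if p\<in>D then 2*p else 0)) = int ((\<Sum>d\<in>D. 2*d) + 2*c + 2*card {d\<in>D. p<d})"
      using sm by simp
    then show ?thesis by (simp split: if_splits)
  qed
  have ng: "negB t = negB xs + (if a < 0 then 1 else 0)" unfolding t_def by (rule negB_tau[OF pl])
  have "fmajS (t, T) = int (\<Sum>d\<in>D'. 2*d) + int (negB t) - (\<Sum>j\<in>T. 2 * int (rk D' j) - 1)"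
    unfolding fmajS_rk D'_def ..
  also have "\<dots> = fmajS (xs, S) + 2 * int c + 2 * int (card {d\<in>D. p<d})
      - (if p \<in> D then 2 * int p else 0) + (if a < 0 then 1 else 0)
      - 2 * (if p \<in> D then 0 else 1) * int (card {j\<in>S. j<p}) - 2 * int (card {j\<in>S. p<j}) - 1"
    unfolding fmajS_rk D_def[symmetric] smi G ng by simp
  finally show ?thesis unfolding t_def T_def D'_def D_def c_def .
qed


lemma label_val:
  assumes SD: "S \<subseteq> desB xs" and pm: "p < length xs" and pS: "p \<notin> S"
  shows "int (fmaj_label xs S p) = (if p \<in> desB xs then 1 + int (card {d\<in>desB xs. p<d}) - int (card {j\<in>S. p<j})
          else int (card {d\<in>desB xs. p<d}) - int (card S) + int (Suc p))"
proof -
  define D where "D = desB xs"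
  have finD: "finite D" unfolding D_def by (rule finite_desB)
  have Dm: "D \<subseteq> {..<length xs}" unfolding D_def by (rule desB_sub)
  have SD': "S \<subseteq> D" using SD D_def by simp
  have finS: "finite S" using SD' finD finite_subset by blast
  show ?thesis
  proof (cases "p \<in> D")
    case True
    have e1: "{q\<in>D-S. p\<le>q} = insert p {q\<in>D-S. p<q}" using True pS by auto
    have e2: "{d\<in>D. p<d} = {q\<in>D-S. p<q} \<union> {j\<in>S. p<j}" using SD' by auto
    have c2: "card {d\<in>D. p<d} = card {q\<in>D-S. p<q} + card {j\<in>S. p<j}"
      unfolding e2 using finD finS by (intro card_Un_disjoint) auto
    have c1: "card {q\<in>D-S. p\<le>q} = Suc (card {q\<in>D-S. p<q})"
      unfolding e1 using finD by (subst card_insert_disjoint) auto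
    have "fmaj_label xs S p = card {q\<in>D-S. p\<le>q}"
      using True pS pm unfolding fmaj_label_def D_def by simp
    then show ?thesis using True c1 c2 unfolding D_def[symmetric] by simp
  next
    case False
    have l: "fmaj_label xs S p = card (D - S) + card {q. q < length xs \<and> q \<notin> D \<and> q \<le> p}"
      using False pm unfolding fmaj_label_def D_def by simp
    have cDS: "card (D - S) = card D - card S" using finS SD' by (simp add: card_Diff_subset)
    have cSD: "card S \<le> card D" using card_mono[OF finD SD'] .
    have e3: "{q. q < length xs \<and> q \<notin> D \<and> q \<le> p} = {..p} - {d\<in>D. d<p}"
      using False pm by auto
    have c3: "card {q. q < length xs \<and> q \<notin> D \<and> q \<le> p} = Suc p - card {d\<in>D. d<p}"
      unfolding e3 by (subst card_Diff_subset) auto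
    have le3: "card {d\<in>D. d<p} \<le> Suc p"
    proof -
      have "{d\<in>D. d<p} \<subseteq> {..p}" by auto
      then have "card {d\<in>D. d<p} \<le> card {..p}" by (intro card_mono) auto
      then show ?thesis by simp
    qed
    have e4: "D = {d\<in>D. d<p} \<union> {d\<in>D. p<d}" using False by auto (metis linorder_neqE_nat)
    have c4: "card D = card {d\<in>D. d<p} + card {d\<in>D. p<d}"
      using finD by (subst e4) (intro card_Un_disjoint, auto)
    show ?thesis using False l cDS cSD c3 le3 c4 unfolding D_def[symmetric] by simp
  qed
qed


lemma phi_unfold: "phi_star a i (xs, S) = (let p = label_pos xs S i in (take p xs @ a # drop p xs,
          {j \<in> S. j < p} \<union> (\<lambda>j. Max {d \<in> desB (take p xs @ a # drop p xs). d < j + 1}) ` {j \<in> S. p < j}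
            \<union> {Max (desB (take p xs @ a # drop p xs))}))"
  by (simp add: phi_star_def Let_def)

theorem lemma2p6:
  fixes n k :: nat and xs :: "int list" and S :: "nat set"
  assumes "1 \<le> k" and "k \<le> n" and "(xs, S) \<in> Bgt (n - 1) (k - 1)"
  shows "(\<forall>i\<in>{1..n - k}. fmajS (phi_star (int n) i (xs, S)) = fmajS (xs, S) + 2 * int i - 1)
       \<and> (\<forall>i\<in>{1..n - k}. fmajS (phi_star (- int n) i (xs, S)) = fmajS (xs, S) + 2 * int i - 2)
       \<and> fmajS (phi_star (- int n) 0 (xs, S)) = fmajS (xs, S) + 2 * int n - 2 * int k"
proof -
  define m where "m = n - 1"
  have nm: "n = Suc m" using assms(1,2) unfolding m_def by simp
  have xs: "xs \<in> signed_perms m" and SD: "S \<subseteq> desB xs" and cS: "card S = k - 1"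
    using assms(3) unfolding Bgt_def m_def by auto
  have len: "length xs = m" using xs unfolding signed_perms_def by auto
  have nk: "n - k = m - card S" using cS nm assms(1) by simp
  have finD: "finite (desB xs)" by (rule finite_desB)
  have finS: "finite S" using SD finD finite_subset by blast
  have Dm: "desB xs \<subseteq> {..<m}" using desB_sub[of xs] len by simp
  have cSsplit: "p \<notin> S \<Longrightarrow> card S = card {j\<in>S. j<p} + card {j\<in>S. p<j}" for p
  proof -
    assume "p \<notin> S"
    then have "S = {j\<in>S. j<p} \<union> {j\<in>S. p<j}" by auto (metis linorder_neqE_nat)
    then show ?thesis using finS by (metis (no_types, lifting) card_Un_disjoint disjoint_iff
        finite_Un mem_Collect_eq order_less_asym)
  qed
  have gen: "fmajS (phi_star a i (xs, S)) = fmajS (xs, S) + 2 * int i - (if 0 < a then 1 else 2)"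
    if a: "a = int (Suc m) \<or> a = - int (Suc m)" and i: "1 \<le> i" "i \<le> m - card S" for a i
  proof -
    define p where "p = label_pos xs S i"
    have lp: "p \<le> m" "p \<notin> S" "fmaj_label xs S p = i"
      using label_props[OF SD, of i] i len unfolding p_def by auto
    have "p \<noteq> m" using lp(3) i len unfolding fmaj_label_def by auto
    then have pm: "p < m" using lp by simp
    have ms: "fmajS (phi_star a i (xs, S)) = fmajS (xs, S) + 2 * int (if 0<a then Suc p else p) + 2 * int (card {d\<in>desB xs. p<d})
      - (if p \<in> desB xs then 2 * int p else 0) + (if a < 0 then 1 else 0)
      - 2 * (if p \<in> desB xs then 0 else 1) * int (card {j\<in>S. j<p}) - 2 * int (card {j\<in>S. p<j}) - 1"
      unfolding phi_unfold p_def[symmetric] Let_def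
      by (rule main_step[OF xs SD lp(1,2) a]) (use pm in simp)
    have lv: "int i = (if p \<in> desB xs then 1 + int (card {d\<in>desB xs. p<d}) - int (card {j\<in>S. p<j})
          else int (card {d\<in>desB xs. p<d}) - int (card S) + int (Suc p))"
      using label_val[OF SD, of p] pm len lp by simp
    show ?thesis using ms lv cSsplit[OF lp(2)] a by (auto split: if_splits)
  qed
  have part3: "fmajS (phi_star (- int n) 0 (xs, S)) = fmajS (xs, S) + 2 * int n - 2 * int k"
  proof -
    define p where "p = label_pos xs S 0"
    have lp: "p \<le> m" "p \<notin> S" "fmaj_label xs S p = 0"
      using label_props[OF SD, of 0] len unfolding p_def by auto
    have pm: "p = m"
    proof (rule ccontr)
      assume "p \<noteq> m"
      then have "p < length xs" using lp len by simp
      show False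
      proof (cases "p \<in> desB xs")
        case True
        have "p \<in> {q \<in> desB xs - S. p \<le> q}" using True lp(2) by auto
        moreover have "finite {q \<in> desB xs - S. p \<le> q}" using finD by auto
        ultimately have "card {q \<in> desB xs - S. p \<le> q} \<noteq> 0" by (metis card_0_eq empty_iff)
        then show False using lp(3) True lp(2) \<open>p < length xs\<close> unfolding fmaj_label_def by simp
      next
        case False
        have "p \<in> {q. q < length xs \<and> q \<notin> desB xs \<and> q \<le> p}" using False \<open>p < length xs\<close> by auto
        moreover have "finite {q. q < length xs \<and> q \<notin> desB xs \<and> q \<le> p}" by auto
        ultimately have "card {q. q < length xs \<and> q \<notin> desB xs \<and> q \<le> p} \<noteq> 0" by (metis card_0_eq empty_iff)
        moreover have "fmaj_label xs S p = card (desB xs - S) + card {q. q < length xs \<and> q \<notin> desB xs \<and> q \<le> p}"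
          unfolding fmaj_label_def using False \<open>p < length xs\<close> by auto
        ultimately show False using lp(3) by linarith
      qed
    qed
    have e1: "{j\<in>S. j<p} = S" using SD Dm pm by auto
    have e2: "{d\<in>desB xs. p<d} = {}" "{j\<in>S. p<j} = {}" using SD Dm pm by auto
    have pD: "p \<notin> desB xs" using Dm pm by auto
    have ms: "fmajS (phi_star (- int n) 0 (xs, S)) = fmajS (xs, S) + 2 * int (if 0< - int n then Suc p else p) + 2 * int (card {d\<in>desB xs. p<d})
      - (if p \<in> desB xs then 2 * int p else 0) + (if - int n < 0 then 1 else 0)
      - 2 * (if p \<in> desB xs then 0 else 1) * int (card {j\<in>S. j<p}) - 2 * int (card {j\<in>S. p<j}) - 1"
      unfolding phi_unfold p_def[symmetric] Let_def
      by (rule main_step[OF xs SD lp(1,2)]) (use nm in auto)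
    show ?thesis using ms[unfolded e1 e2] pD pm nm cS assms(1) by simp
  qed
  show ?thesis
  proof (intro conjI ballI part3)
    fix i assume "i \<in> {1..n-k}"
    then show "fmajS (phi_star (int n) i (xs, S)) = fmajS (xs, S) + 2 * int i - 1"
      using gen[of "int n" i] nm nk by simp
  next
    fix i assume "i \<in> {1..n-k}"
    then show "fmajS (phi_star (- int n) i (xs, S)) = fmajS (xs, S) + 2 * int i - 2"
      using gen[of "- int n" i] nm nk by simp
  qed
qed

end
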